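(* For the class $\mathcal P_m$ of envy-free item-pricing auctions with prices in $\{1/m,\dots,m/m\}^k$, the matrix $\Gamma^{\mathrm{IP}}$ is $(2,1)$-admissible and implementable with complexity $m$ (with respect to learner actions $\mathcal P_m$, adversary actions = profiles of combinatorial valuations, and payoff $f(\vec a,\vec v)=\mathrm{Rev}(\vec a,\vec v)$).
   Context: There are $k$ heterogeneous items with supplies $s_\ell\ge1$ (possibly infinite), and $n$ bidders with combinatorial valuations $v_i:\{0,1\}^k\to[0,1]$, $v_i(\vec 0)=0$. An envy-free item-pricing auction with price vector $\vec a$ considers bidders $i=1,\dots,n$ in order and gives bidder $i$ a bundle $\vec q_i\in\{0,1\}^k$ maximizing $v_i(\vec q_i)-\vec a\cdot\vec q_i$ among bundles composable from remaining supplies (ties in utility broken in favor of a bundle with larger total price), charging $\vec a\cdot\vec q_i$; $\mathrm{Rev}(\vec a,\vec v)$ is the total charge. $\mathcal P_m$: such auctions with all $a_\ell\in\{1/m,\dots,m/m\}$. $\Gamma^{\mathrm{IP}}$: the $|\mathcal P_m|\times k\lceil\log_2m\rceil$ binary matrix whose entry in row $\vec a$ and column $(\ell-1)\lceil\log_2 m\rceil+\beta$ is the $\beta$-th bit of the integer $ma_\ell$. A matrix $\Gamma$ (rows indexed by learner actions) is $(\kappa,\delta)$-admissible if its rows are distinct, each column has at most $\kappa$ distinct values and distinct values in a column differ by at least $\delta$; it is implementable with complexity $M$ if for each column $j$ there is a finite set $S_j$ of pairs $(w,y)$ ($w\ge0$, $y$ an adversary action), $|S_j|\le M$, with $\Gamma_{xj}-\Gamma_{x'j}=\sum_{(w,y)\in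 S_j}w(f(x,y)-f(x',y))$ for all learner actions $x,x'$. *)

theory Defs
  imports Complex_Main "HOL-Library.Extended_Nat"
begin

(* Items are 0..k-1, bidders 0..n-1. A bundle q in {0,1}^k is represented by
   the set of items it contains, a subset of {..<k}. *)

definition prices :: "nat \<Rightarrow> nat \<Rightarrow> (nat \<Rightarrow> real) set" where
  "prices k m = {a. (\<forall>l<k. \<exists>t\<in>{1..m}. a l = real t / real m) \<and> (\<forall>l. k \<le> l \<longrightarrow> a l = 0)}"

definition profiles :: "nat \<Rightarrow> nat \<Rightarrow> (nat \<Rightarrow> nat set \<Rightarrow> real) set" where
  "profiles n k = {v. (\<forall>i<n. v i {} = 0 \<and> (\<forall>q. q \<subseteq> {..<k} \<longrightarrow> 0 \<le> v i q \<and> v i q \<le> 1))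
      \<and> (\<forall>i q. (n \<le> i \<or> \<not> q \<subseteq> {..<k}) \<longrightarrow> v i q = 0)}"

definition bprice :: "(nat \<Rightarrow> real) \<Rightarrow> nat set \<Rightarrow> real" where
  "bprice a q = (\<Sum>l\<in>q. a l)"

definition feasible :: "nat \<Rightarrow> (nat \<Rightarrow> enat) \<Rightarrow> nat set set" where
  "feasible k r = {q. q \<subseteq> {..<k} \<and> (\<forall>l\<in>q. 1 \<le> r l)}"

definition util_opt :: "nat \<Rightarrow> (nat \<Rightarrow> real) \<Rightarrow> (nat set \<Rightarrow> real) \<Rightarrow> (nat \<Rightarrow> enat) \<Rightarrow> nat set set" where
  "util_opt k a vi r = {q \<in> feasible k r. \<forall>q'\<in>feasible k r. vi q' - bprice a q' \<le> vi q - bprice a q}"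

definition best_bundles :: "nat \<Rightarrow> (nat \<Rightarrow> real) \<Rightarrow> (nat set \<Rightarrow> real) \<Rightarrow> (nat \<Rightarrow> enat) \<Rightarrow> nat set set" where
  "best_bundles k a vi r = {q \<in> util_opt k a vi r. \<forall>q'\<in>util_opt k a vi r. bprice a q' \<le> bprice a q}"

(* state (remaining supplies, revenue so far) after bidders 0..i-1 have been served;
   sel picks one bundle among the remaining ties *)
fun auc_state :: "(nat set set \<Rightarrow> nat set) \<Rightarrow> nat \<Rightarrow> (nat \<Rightarrow> enat) \<Rightarrow> (nat \<Rightarrow> real)
     \<Rightarrow> (nat \<Rightarrow> nat set \<Rightarrow> real) \<Rightarrow> nat \<Rightarrow> (nat \<Rightarrow> enat) \<times> real" where
  "auc_state sel k s a v 0 = (s, 0)"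
| "auc_state sel k s a v (Suc i) =
     (let (r, rv) = auc_state sel k s a v i;
          q = sel (best_bundles k a (v i) r)
      in (\<lambda>l. if l \<in> q then r l - 1 else r l, rv + bprice a q))"

definition Rev :: "(nat set set \<Rightarrow> nat set) \<Rightarrow> nat \<Rightarrow> (nat \<Rightarrow> enat) \<Rightarrow> nat
     \<Rightarrow> (nat \<Rightarrow> real) \<Rightarrow> (nat \<Rightarrow> nat set \<Rightarrow> real) \<Rightarrow> real" where
  "Rev sel k s n a v = snd (auc_state sel k s a v n)"

definition bitlen :: "nat \<Rightarrow> nat" where
  "bitlen m = nat \<lceil>log 2 (real m)\<rceil>"

(* Gamma^IP with 0-based column index j = l * bitlen m + b (l < k, b < bitlen m);
   entry = b-th bit (0-based, least significant first) of the integer m * a_l *)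
definition Gamma_IP :: "nat \<Rightarrow> (nat \<Rightarrow> real) \<Rightarrow> nat \<Rightarrow> real" where
  "Gamma_IP m a j = (let L = bitlen m; l = j div L; b = j mod L
                     in real ((nat \<lfloor>real m * a l\<rfloor> div 2 ^ b) mod 2))"

definition admissible :: "'x set \<Rightarrow> nat \<Rightarrow> ('x \<Rightarrow> nat \<Rightarrow> real) \<Rightarrow> nat \<Rightarrow> real \<Rightarrow> bool" where
  "admissible X ncols G \<kappa> \<delta> \<longleftrightarrow>
     (\<forall>x\<in>X. \<forall>x'\<in>X. x \<noteq> x' \<longrightarrow> (\<exists>j<ncols. G x j \<noteq> G x' j)) \<and>
     (\<forall>j<ncols. finite ((\<lambda>x. G x j) ` X) \<and> card ((\<lambda>x. G x j) ` X) \<le> \<kappa>) \<and>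
     (\<forall>j<ncols. \<forall>x\<in>X. \<forall>x'\<in>X. G x j \<noteq> G x' j \<longrightarrow> \<delta> \<le> \<bar>G x j - G x' j\<bar>)"

definition implementable :: "'x set \<Rightarrow> 'y set \<Rightarrow> ('x \<Rightarrow> 'y \<Rightarrow> real) \<Rightarrow> nat
     \<Rightarrow> ('x \<Rightarrow> nat \<Rightarrow> real) \<Rightarrow> nat \<Rightarrow> bool" where
  "implementable X Y f ncols G M \<longleftrightarrow>
     (\<forall>j<ncols. \<exists>S :: (real \<times> 'y) set. finite S \<and> card S \<le> M \<and>
        (\<forall>(w, y)\<in>S. 0 \<le> w \<and> y \<in> Y) \<and>
        (\<forall>x\<in>X. \<forall>x'\<in>X. G x j - G x' j = (\<Sum>(w, y)\<in>S. w * (f x y - f x' y))))"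

end

theory Submission
  imports Defs
begin

lemma price_u:
  assumes "a \<in> prices k m" "l < k" "1 \<le> m"
  shows "\<exists>u. 1 \<le> u \<and> u \<le> m \<and> a l = real u / real m \<and> nat \<lfloor>real m * a l\<rfloor> = u"
proof -
  obtain u where u: "u \<in> {1..m}" "a l = real u / real m" using assms unfolding prices_def by blast
  have "real m * a l = real u" using u assms by simp
  thus ?thesis using u by auto
qed

lemma price_pos: "a \<in> prices k m \<Longrightarrow> l < k \<Longrightarrow> 1 \<le> m \<Longrightarrow> 0 < a l"
proof -
  assume as: "a \<in> prices k m" "l < k" "1 \<le> m"
  then obtain u where "1 \<le> u" "a l = real u / real m" using price_u by blast
  thus ?thesis using as by simp
qed

lemma bprice_nonneg: "a \<in> prices k m \<Longrightarrow> 1 \<le> m \<Longrightarrow> q \<subseteq> {..<k} \<Longrightarrow> 0 \<le> bprice a q"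
  unfolding bprice_def by (rule sum_nonneg) (use price_pos in fastforce)

lemma bprice_pos: "a \<in> prices k m \<Longrightarrow> 1 \<le> m \<Longrightarrow> q \<subseteq> {..<k} \<Longrightarrow> q \<noteq> {} \<Longrightarrow> 0 < bprice a q"
proof -
  assume as: "a \<in> prices k m" "1 \<le> m" "q \<subseteq> {..<k}" "q \<noteq> {}"
  then obtain x where x: "x \<in> q" by blast
  have fin: "finite q" using as finite_subset by blast
  have "bprice a q = a x + bprice a (q - {x})" unfolding bprice_def using fin x by (simp add: sum.remove)
  moreover have "0 < a x" using price_pos as x by blast
  moreover have "0 \<le> bprice a (q - {x})" using bprice_nonneg as by blast
  ultimately show ?thesis by linarith
qed

lemma best_unique:
  assumes "q0 \<in> feasible k r"
    "\<forall>q\<in>feasible k r. vi q - bprice a q \<le> vi q0 - bprice a q0"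
    "\<forall>q\<in>feasible k r. vi q - bprice a q = vi q0 - bprice a q0 \<longrightarrow> q = q0 \<or> bprice a q < bprice a q0"
  shows "best_bundles k a vi r = {q0}"
proof -
  have u0: "q0 \<in> util_opt k a vi r" using assms unfolding util_opt_def by auto
  have uo: "q \<in> util_opt k a vi r \<Longrightarrow> q = q0 \<or> bprice a q < bprice a q0" for q
    using assms u0 unfolding util_opt_def by (metis (no_types, lifting) mem_Collect_eq order_antisym)
  show ?thesis
  proof
    show "best_bundles k a vi r \<subseteq> {q0}"
      using uo u0 unfolding best_bundles_def by force
    show "{q0} \<subseteq> best_bundles k a vi r"
      using uo u0 unfolding best_bundles_def by force
  qed
qed

lemma empty_feas: "{} \<in> feasible k r" unfolding feasible_def by auto

lemma best_zero:
  assumes "a \<in> prices k m" "1 \<le> m"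
  shows "best_bundles k a (\<lambda>q. 0) r = {{}}"
proof (rule best_unique[OF empty_feas], safe)
  fix q assume "q \<in> feasible k r"
  hence "q \<subseteq> {..<k}" unfolding feasible_def by auto
  thus "0 - bprice a q \<le> 0 - bprice a {}" using bprice_nonneg[OF assms] by (simp add: bprice_def)
  fix x assume "0 - bprice a q = 0 - bprice a {}" "x \<in> q"
  thus "x \<in> {}" using bprice_pos[OF assms \<open>q \<subseteq> {..<k}\<close>] by (auto simp: bprice_def)
qed

definition vt :: "nat \<Rightarrow> nat \<Rightarrow> nat \<Rightarrow> nat \<Rightarrow> nat \<Rightarrow> nat set \<Rightarrow> real" where
  "vt k l m t i q = (if i = 0 \<and> l \<in> q \<and> q \<subseteq> {..<k} then real t / real m else 0)"

lemma best_first: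
  assumes "a \<in> prices k m" "1 \<le> m" "l < k" "1 \<le> s l"
  shows "best_bundles k a (vt k l m t 0) s = (if a l \<le> real t / real m then {{l}} else {{}})"
proof -
  let ?c = "real t / real m"
  have rem: "l \<in> q \<Longrightarrow> q \<subseteq> {..<k} \<Longrightarrow> bprice a q = a l + bprice a (q - {l})" for q
    unfolding bprice_def by (meson finite_nat_iff_bounded sum.remove subset_iff)
  have rp: "l \<in> q \<Longrightarrow> q \<subseteq> {..<k} \<Longrightarrow> q \<noteq> {l} \<Longrightarrow> 0 < bprice a (q - {l})" for q
    by (rule bprice_pos[OF assms(1,2)]) auto
  have rn: "q \<subseteq> {..<k} \<Longrightarrow> 0 \<le> bprice a (q - {l})" for q
    by (rule bprice_nonneg[OF assms(1,2)]) auto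
  have pl: "bprice a {l} = a l" by (simp add: bprice_def)
  have al: "0 < a l" using price_pos assms by blast
  show ?thesis
  proof (cases "a l \<le> ?c")
    case True
    have f: "{l} \<in> feasible k s" using assms unfolding feasible_def by auto
    have "best_bundles k a (vt k l m t 0) s = {{l}}"
    proof (rule best_unique[OF f]; intro ballI impI)
      fix q assume q: "q \<in> feasible k s"
      hence qk: "q \<subseteq> {..<k}" unfolding feasible_def by auto
      show "vt k l m t 0 q - bprice a q \<le> vt k l m t 0 {l} - bprice a {l}"
      proof (cases "l \<in> q")
        case True thus ?thesis using rem[OF True qk] rn[OF qk] qk assms pl by (simp add: vt_def)
      next
        case False thus ?thesis using bprice_nonneg[OF assms(1,2) qk] assms pl True by (simp add: vt_def)
      qed
    next
      fix q assume q: "q \<in> feasible k s"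
      hence qk: "q \<subseteq> {..<k}" unfolding feasible_def by auto
      assume eq0: "vt k l m t 0 q - bprice a q = vt k l m t 0 {l} - bprice a {l}"
      show "q = {l} \<or> bprice a q < bprice a {l}"
      proof (cases "q = {l}")
        case True thus ?thesis by simp
      next
      case neq: False
      have eq: "vt k l m t 0 q - bprice a q = vt k l m t 0 {l} - bprice a {l}" "q \<noteq> {l}" using eq0 neq by auto
      have "bprice a q < bprice a {l}"
      proof (cases "l \<in> q")
        case True thus ?thesis using rem[OF True qk] rp[OF True qk eq(2)] qk assms pl eq by (simp add: vt_def)
      next
        case False thus ?thesis using bprice_nonneg[OF assms(1,2) qk] assms pl True eq al by (simp add: vt_def)
      qed
      thus ?thesis by simp
      qed
    qed
    thus ?thesis using True by simp
  next
    case False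
    have "best_bundles k a (vt k l m t 0) s = {{}}"
    proof (rule best_unique[OF empty_feas]; intro ballI impI)
      fix q assume q: "q \<in> feasible k s"
      hence qk: "q \<subseteq> {..<k}" unfolding feasible_def by auto
      show "vt k l m t 0 q - bprice a q \<le> vt k l m t 0 {} - bprice a {}"
      proof (cases "l \<in> q")
        case True thus ?thesis using rem[OF True qk] rn[OF qk] qk assms False by (simp add: vt_def bprice_def)
      next
        case False thus ?thesis using bprice_nonneg[OF assms(1,2) qk] by (simp add: vt_def bprice_def)
      qed
    next
      fix q assume q: "q \<in> feasible k s"
      hence qk: "q \<subseteq> {..<k}" unfolding feasible_def by auto
      assume eq: "vt k l m t 0 q - bprice a q = vt k l m t 0 {} - bprice a {}"
      have "q = {}"
      proof (rule ccontr)
      assume ne: "q \<noteq> {}"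
      show False
      proof (cases "l \<in> q")
        case True thus ?thesis using rem[OF True qk] rn[OF qk] qk assms False eq by (simp add: vt_def bprice_def)
      next
        case False thus ?thesis using bprice_pos[OF assms(1,2) qk ne] eq by (auto simp: vt_def bprice_def)
      qed
      qed
      thus "q = {} \<or> bprice a q < bprice a {}" by simp
    qed
    thus ?thesis using False by simp
  qed
qed

lemma rev_vt:
  assumes "a \<in> prices k m" "1 \<le> m" "l < k" "1 \<le> s l" "1 \<le> n"
    and sel: "\<forall>B. B \<noteq> {} \<longrightarrow> sel B \<in> B"
  shows "Rev sel k s n a (vt k l m t) = (if a l \<le> real t / real m then a l else 0)"
proof -
  let ?q0 = "if a l \<le> real t / real m then {l} else {}"
  have b0: "sel (best_bundles k a (vt k l m t 0) s) = ?q0"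
    using best_first[of a k m l s t, OF assms(1-4)] sel by (auto split: if_splits)
  have z: "vt k l m t (Suc i) = (\<lambda>q. 0)" for i by (auto simp: vt_def)
  have sz: "sel {{}} = {}" using sel by blast
  have "snd (auc_state sel k s a (vt k l m t) (Suc i)) = bprice a ?q0" for i
  proof (induction i)
    case 0 show ?case using b0 by simp
  next
    case (Suc i)
    obtain r rv where st: "auc_state sel k s a (vt k l m t) (Suc i) = (r, rv)" by (cases "auc_state sel k s a (vt k l m t) (Suc i)")
    show ?case using Suc st by (simp add: z best_zero[OF assms(1,2)] sz bprice_def)
  qed
  moreover have "n = Suc (n - 1)" using assms by simp
  ultimately have "Rev sel k s n a (vt k l m t) = bprice a ?q0" unfolding Rev_def by metis
  thus ?thesis by (simp add: bprice_def)
qed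


lemma weights:
  fixes g :: "nat \<Rightarrow> real" and m :: nat
  assumes g: "\<forall>u. 0 \<le> g u \<and> g u \<le> 1" and m: "1 \<le> m"
  defines "W \<equiv> \<lambda>u. if u \<le> m then real m * (g u + real m) / real u else 0"
  defines "w \<equiv> \<lambda>t. W t - W (Suc t)"
  shows "\<forall>t\<in>{1..m}. 0 \<le> w t"
    and "\<And>u. 1 \<le> u \<Longrightarrow> u \<le> m \<Longrightarrow>
         (\<Sum>t\<in>{1..m}. w t * (if u \<le> t then real u / real m else 0)) = g u + real m"
proof -
  show "\<forall>t\<in>{1..m}. 0 \<le> w t"
  proof
    fix t assume t: "t \<in> {1..m}"
    show "0 \<le> w t"
    proof (cases "t = m")
      case True thus ?thesis using g m unfolding w_def W_def by simp
    next
      case False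
      hence tm: "t < m" "Suc t \<le> m" using t by auto
      have t1: "1 \<le> t" using t by simp
      have a: "real t * g (Suc t) \<le> real t" using g by (simp add: mult_right_le_one_le)
      have b: "0 \<le> g t * (real t + 1)" using g by simp
      have c: "real t < real m" using tm by simp
      have "(g (Suc t) + real m) / (real t + 1) \<le> (g t + real m) / real t"
      proof -
        have "real t * g (Suc t) \<le> real m + (g t + real t * g t)" using a b c by (simp add: algebra_simps)
        thus ?thesis using t1 by (simp add: divide_simps algebra_simps)
      qed
      hence "real m * ((g (Suc t) + real m) / (real t + 1)) \<le> real m * ((g t + real m) / real t)"
        by (rule mult_left_mono) simp
      thus ?thesis using tm unfolding w_def W_def by (simp add: add.commute)
    qed
  qed
  fix u assume u: "1 \<le> u" "u \<le> m"
  have "(\<Sum>t\<in>{1..m}. w t * (if u \<le> t then real u / real m else 0))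
      = (\<Sum>t\<in>{t\<in>{1..m}. u \<le> t}. w t * (real u / real m))"
    by (subst sum.inter_filter) (auto intro: sum.cong)
  also have "{t\<in>{1..m}. u \<le> t} = {u..m}" using u by auto
  also have "(\<Sum>t\<in>{u..m}. w t * (real u / real m)) = (\<Sum>t\<in>{u..m}. w t) * (real u / real m)"
    by (rule sum_distrib_right[symmetric])
  also have "(\<Sum>t\<in>{u..m}. w t) = - (\<Sum>t\<in>{u..m}. W (Suc t) - W t)"
    unfolding w_def by (simp add: sum_negf[symmetric])
  also have "(\<Sum>t\<in>{u..m}. W (Suc t) - W t) = W (Suc m) - W u" using u by (simp add: sum_Suc_diff)
  also have "- (W (Suc m) - W u) * (real u / real m) = g u + real m"
    using u unfolding W_def by simp
  finally show "(\<Sum>t\<in>{1..m}. w t * (if u \<le> t then real u / real m else 0)) = g u + real m" .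
qed

lemma bitlen_ge: "1 \<le> m \<Longrightarrow> m \<le> 2 ^ bitlen m"
proof -
  assume m: "1 \<le> m"
  have "0 \<le> log 2 (real m)" using m by simp
  hence "real m = 2 powr (log 2 (real m))" using m by simp
  also have "\<dots> \<le> 2 powr (real (bitlen m))"
    unfolding bitlen_def using \<open>0 \<le> log 2 (real m)\<close>
    by (intro powr_mono) (auto simp: le_of_int_ceiling)
  also have "\<dots> = 2 ^ bitlen m" by (simp add: powr_realpow)
  finally show ?thesis by (metis of_nat_le_iff of_nat_numeral of_nat_power)
qed

lemma bits_differ:
  fixes u u' L :: nat
  assumes "1 \<le> u" "u \<le> 2 ^ L" "1 \<le> u'" "u' \<le> 2 ^ L" "u \<noteq> u'"
  shows "\<exists>b<L. (u div 2 ^ b) mod 2 \<noteq> (u' div 2 ^ b) mod 2"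
proof -
  have "u mod 2 ^ L \<noteq> u' mod 2 ^ L"
    using assms by (cases "u = 2 ^ L"; cases "u' = 2 ^ L") auto
  hence "take_bit L u \<noteq> take_bit L u'" by (simp add: take_bit_eq_mod)
  then obtain b where "bit (take_bit L u) b \<noteq> bit (take_bit L u') b" using bit_eq_iff by blast
  hence "b < L" "bit u b \<noteq> bit u' b" by (auto simp: bit_take_bit_iff)
  thus ?thesis by (auto simp: bit_iff_odd odd_iff_mod_2_eq_one)
qed


lemma gamma_val: "Gamma_IP m a j \<in> {0, 1}"
  unfolding Gamma_IP_def Let_def by (cases "(nat \<lfloor>real m * a (j div bitlen m)\<rfloor> div 2 ^ (j mod bitlen m)) mod 2 = 0") auto

theorem lemma3p4:
  fixes k n m :: nat and s :: "nat \<Rightarrow> enat" and sel :: "nat set set \<Rightarrow> nat set"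
  assumes "1 \<le> m" and "1 \<le> n" and "\<forall>l<k. 1 \<le> s l"
    and "\<forall>B. B \<noteq> {} \<longrightarrow> sel B \<in> B"
  shows "admissible (prices k m) (k * bitlen m) (Gamma_IP m) 2 1 \<and>
         implementable (prices k m) (profiles n k) (\<lambda>a v. Rev sel k s n a v)
           (k * bitlen m) (Gamma_IP m) m"
proof
  define L where "L = bitlen m"
  have mL: "m \<le> 2 ^ L" using bitlen_ge assms(1) unfolding L_def by blast
  have col: "Gamma_IP m a (l * L + b) = real ((nat \<lfloor>real m * a l\<rfloor> div 2 ^ b) mod 2)" if "b < L" for a l b
  proof -
    have "(l * L + b) div L = l" "(l * L + b) mod L = b" using that by auto
    thus ?thesis unfolding Gamma_IP_def Let_def L_def[symmetric] by simp
  qed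
  show "admissible (prices k m) (k * bitlen m) (Gamma_IP m) 2 1"
    unfolding admissible_def
  proof (intro conjI ballI allI impI)
    fix x x' assume x: "x \<in> prices k m" and x': "x' \<in> prices k m" and ne: "x \<noteq> x'"
    then obtain l where l: "x l \<noteq> x' l" by blast
    have lk: "l < k"
    proof (rule ccontr)
      assume "\<not> l < k" thus False using x x' l unfolding prices_def by auto
    qed
    obtain u where u: "1 \<le> u" "u \<le> m" "x l = real u / real m" "nat \<lfloor>real m * x l\<rfloor> = u"
      using price_u[OF x lk assms(1)] by blast
    obtain u' where u': "1 \<le> u'" "u' \<le> m" "x' l = real u' / real m" "nat \<lfloor>real m * x' l\<rfloor> = u'"
      using price_u[OF x' lk assms(1)] by blast
    have "u \<noteq> u'" using u u' l by auto
    then obtain b where b: "b < L" "(u div 2 ^ b) mod 2 \<noteq> (u' div 2 ^ b) mod 2"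
      using bits_differ[of u L u'] u u' mL by auto
    have "l * L + b < k * bitlen m"
    proof -
      have "l * L + b < (l + 1) * L" using b by simp
      also have "\<dots> \<le> k * L" using lk by (intro mult_right_mono) auto
      finally show ?thesis unfolding L_def .
    qed
    moreover have "Gamma_IP m x (l * L + b) \<noteq> Gamma_IP m x' (l * L + b)"
      using col[OF b(1)] u(4) u'(4) b(2) by simp
    ultimately show "\<exists>j<k * bitlen m. Gamma_IP m x j \<noteq> Gamma_IP m x' j" by blast
  next
    fix j
    have sub: "(\<lambda>x. Gamma_IP m x j) ` prices k m \<subseteq> {0, 1}" using gamma_val by blast
    show "finite ((\<lambda>x. Gamma_IP m x j) ` prices k m)" using sub finite_subset by blast
    show "card ((\<lambda>x. Gamma_IP m x j) ` prices k m) \<le> 2"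
      using card_mono[OF _ sub] by simp
  next
    fix j x x' assume "Gamma_IP m x j \<noteq> Gamma_IP m x' j"
    thus "1 \<le> \<bar>Gamma_IP m x j - Gamma_IP m x' j\<bar>" using gamma_val[of m x j] gamma_val[of m x' j] by auto
  qed
  show "implementable (prices k m) (profiles n k) (\<lambda>a v. Rev sel k s n a v) (k * bitlen m) (Gamma_IP m) m"
    unfolding implementable_def
  proof (intro allI impI)
    fix j assume j: "j < k * bitlen m"
    have L0: "0 < L" using j unfolding L_def by (cases "bitlen m") auto
    define l where "l = j div L"
    define b where "b = j mod L"
    have jlb: "j = l * L + b" unfolding l_def b_def by simp
    have bL: "b < L" unfolding b_def using L0 by simp
    have lk: "l < k" unfolding l_def using j L0 unfolding L_def by (simp add: less_mult_imp_div_less)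
    define g where "g = (\<lambda>u::nat. real ((u div 2 ^ b) mod 2))"
    have g01: "\<forall>u. 0 \<le> g u \<and> g u \<le> 1" unfolding g_def by auto
    define W where "W \<equiv> \<lambda>u. if u \<le> m then real m * (g u + real m) / real u else 0"
    define w where "w \<equiv> \<lambda>t. W t - W (Suc t)"
    note wts = weights[OF g01 assms(1), folded W_def, folded w_def]
    define S where "S = (\<lambda>t. (w t, vt k l m t)) ` {1..m}"
    have inj: "inj_on (\<lambda>t. (w t, vt k l m t)) {1..m}"
    proof (rule inj_onI)
      fix t t' assume "t \<in> {1..m}" "t' \<in> {1..m}" "(w t, vt k l m t) = (w t', vt k l m t')"
      hence "vt k l m t 0 {l} = vt k l m t' 0 {l}" by simp
      hence "real t / real m = real t' / real m" using lk by (simp add: vt_def)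
      thus "t = t'" using assms(1) by simp
    qed
    have prof: "vt k l m t \<in> profiles n k" if "t \<le> m" for t
      unfolding profiles_def vt_def using assms(1,2) that by auto
    have key: "(\<Sum>t\<in>{1..m}. w t * Rev sel k s n x (vt k l m t)) = Gamma_IP m x j + real m"
      if x: "x \<in> prices k m" for x
    proof -
      obtain u where u: "1 \<le> u" "u \<le> m" "x l = real u / real m" "nat \<lfloor>real m * x l\<rfloor> = u"
        using price_u[OF x lk assms(1)] by blast
      have "Rev sel k s n x (vt k l m t) = (if u \<le> t then real u / real m else 0)" for t
        using rev_vt[OF x assms(1) lk _ assms(2) assms(4), of s t] assms(3) lk u(3) assms(1)
        by (simp add: divide_le_cancel)
      hence "(\<Sum>t\<in>{1..m}. w t * Rev sel k s n x (vt k l m t)) = (\<Sum>t\<in>{1..m}. w t * (if u \<le> t then real u / real m else 0))"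
        by simp
      also have "\<dots> = g u + real m"
        using wts(2)[OF u(1,2)] unfolding w_def W_def by simp
      also have "g u = Gamma_IP m x j" unfolding jlb col[OF bL] u(4) g_def by simp
      finally show ?thesis .
    qed
    show "\<exists>S :: (real \<times> (nat \<Rightarrow> nat set \<Rightarrow> real)) set. finite S \<and> card S \<le> m \<and>
        (\<forall>(w, y)\<in>S. 0 \<le> w \<and> y \<in> profiles n k) \<and>
        (\<forall>x\<in>prices k m. \<forall>x'\<in>prices k m. Gamma_IP m x j - Gamma_IP m x' j =
           (\<Sum>(w, y)\<in>S. w * (Rev sel k s n x y - Rev sel k s n x' y)))"
    proof (intro exI[of _ S] conjI ballI)
      show "finite S" unfolding S_def by simp
      show "card S \<le> m" unfolding S_def using card_image_le[of "{1..m}"] by simp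
      fix p assume "p \<in> S"
      thus "case p of (w, y) \<Rightarrow> 0 \<le> w \<and> y \<in> profiles n k"
      proof -
        from \<open>p \<in> S\<close> obtain t where t: "t \<in> {1..m}" "p = (w t, vt k l m t)" unfolding S_def by blast
        have "0 \<le> w t" using wts(1) t(1) unfolding w_def W_def by blast
        thus ?thesis using t prof by auto
      qed
    next
      fix x x' assume x: "x \<in> prices k m" and x': "x' \<in> prices k m"
      have "(\<Sum>(w, y)\<in>S. w * (Rev sel k s n x y - Rev sel k s n x' y))
          = (\<Sum>t\<in>{1..m}. w t * (Rev sel k s n x (vt k l m t) - Rev sel k s n x' (vt k l m t)))"
        unfolding S_def by (subst sum.reindex[OF inj]) simp
      also have "\<dots> = (\<Sum>t\<in>{1..m}. w t * Rev sel k s n x (vt k l m t)) - (\<Sum>t\<in>{1..m}. w t * Rev sel k s n x' (vt k l m t))"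
        by (simp add: right_diff_distrib sum_subtractf)
      also have "\<dots> = Gamma_IP m x j - Gamma_IP m x' j" using key[OF x] key[OF x'] by simp
      finally show "Gamma_IP m x j - Gamma_IP m x' j =
           (\<Sum>(w, y)\<in>S. w * (Rev sel k s n x y - Rev sel k s n x' y))" by simp
    qed
  qed
qed

end
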